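(* Let $f\in D[t;\sigma,\delta]$ be monic of degree $m\ge2$ and let $B$ be a subring of $D$. (i) $f$ is $B$-weak semi-invariant if and only if $B\subseteq\mathrm{Nuc}_r(S_f)$. (ii) If $f$ is $B$-weak semi-invariant but not right invariant, then $B\subseteq \mathrm{Nuc}(S_f)\subseteq D$.
   Context: $D$ is an associative division ring, $\sigma$ a ring endomorphism of $D$, $\delta$ a left $\sigma$-derivation ($\delta(ab)=\sigma(a)\delta(b)+\delta(a)b$, additive). $R=D[t;\sigma,\delta]$ is the skew polynomial ring with $ta=\sigma(a)t+\delta(a)$. For monic $f$ of degree $m$, $S_f$ is the set of polynomials of degree $<m$ with multiplication $g\circ h=$ remainder of $gh$ upon right division by $f$ ($gh=qf+r$, $\deg r<m$). Associator $[x,y,z]=(xy)z-x(yz)$; $\mathrm{Nuc}_r(A)=\{x:[A,A,x]=0\}$; $\mathrm{Nuc}(A)=\{x:[x,A,A]=[A,x,A]=[A,A,x]=0\}$. $f$ is $B$-weak semi-invariant if $fB\subseteq Df$. $f$ is right invariant if $fR\subseteq Rf$ (i.e. $Rf$ is a two-sided ideal of $R$). *)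

theory Defs
  imports "HOL-Computational_Algebra.Polynomial"
begin

text \<open>Skew polynomial ring D[t; sigma, delta] over a division ring D, with
elements represented as coefficient lists ('a poly, used only as a container of
coefficients: p = sum_i coeff p i * t^i, coefficients written on the left).
The commutative multiplication of 'a poly is NOT used; skew_mult is the product.\<close>

definition ring_endo :: "('a::division_ring \<Rightarrow> 'a) \<Rightarrow> bool" where
  "ring_endo \<sigma> \<longleftrightarrow> (\<forall>a b. \<sigma> (a + b) = \<sigma> a + \<sigma> b) \<and>
     (\<forall>a b. \<sigma> (a * b) = \<sigma> a * \<sigma> b) \<and> \<sigma> 1 = 1"

definition left_sigma_derivation :: "('a::division_ring \<Rightarrow> 'a) \<Rightarrow> ('a \<Rightarrow> 'a) \<Rightarrow> bool" where
  "left_sigma_derivation \<sigma> \<delta> \<longleftrightarrow> (\<forall>a b. \<delta> (a + b) = \<delta> a + \<delta> b) \<and>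
     (\<forall>a b. \<delta> (a * b) = \<sigma> a * \<delta> b + \<delta> a * b)"

definition is_subring :: "'a::division_ring set \<Rightarrow> bool" where
  "is_subring B \<longleftrightarrow> 0 \<in> B \<and> 1 \<in> B \<and> (\<forall>a\<in>B. \<forall>b\<in>B. a + b \<in> B \<and> a * b \<in> B) \<and>
     (\<forall>a\<in>B. - a \<in> B)"

text \<open>left multiplication by t: t (a t^i) = sigma(a) t^(i+1) + delta(a) t^i\<close>
definition tmul :: "('a::division_ring \<Rightarrow> 'a) \<Rightarrow> ('a \<Rightarrow> 'a) \<Rightarrow> 'a poly \<Rightarrow> 'a poly" where
  "tmul \<sigma> \<delta> p = pCons 0 (map_poly \<sigma> p) + map_poly \<delta> p"

definition lscal :: "'a::division_ring \<Rightarrow> 'a poly \<Rightarrow> 'a poly" where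
  "lscal c p = map_poly (\<lambda>x. c * x) p"

definition skew_mult :: "('a::division_ring \<Rightarrow> 'a) \<Rightarrow> ('a \<Rightarrow> 'a) \<Rightarrow> 'a poly \<Rightarrow> 'a poly \<Rightarrow> 'a poly" where
  "skew_mult \<sigma> \<delta> p q = (\<Sum>i\<le>degree p. lscal (coeff p i) ((tmul \<sigma> \<delta> ^^ i) q))"

definition skew_rmod :: "('a::division_ring \<Rightarrow> 'a) \<Rightarrow> ('a \<Rightarrow> 'a) \<Rightarrow> 'a poly \<Rightarrow> 'a poly \<Rightarrow> 'a poly" where
  "skew_rmod \<sigma> \<delta> g f = (THE r. degree r < degree f \<and> (\<exists>q. g = skew_mult \<sigma> \<delta> q f + r))"

definition Sf_carrier :: "'a::division_ring poly \<Rightarrow> 'a poly set" where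
  "Sf_carrier f = {g. degree g < degree f}"

definition Sf_mult :: "('a::division_ring \<Rightarrow> 'a) \<Rightarrow> ('a \<Rightarrow> 'a) \<Rightarrow> 'a poly \<Rightarrow> 'a poly \<Rightarrow> 'a poly \<Rightarrow> 'a poly" where
  "Sf_mult \<sigma> \<delta> f g h = skew_rmod \<sigma> \<delta> (skew_mult \<sigma> \<delta> g h) f"

definition Sf_assoc :: "('a::division_ring \<Rightarrow> 'a) \<Rightarrow> ('a \<Rightarrow> 'a) \<Rightarrow> 'a poly \<Rightarrow> 'a poly \<Rightarrow> 'a poly \<Rightarrow> 'a poly \<Rightarrow> 'a poly" where
  "Sf_assoc \<sigma> \<delta> f x y z =
     Sf_mult \<sigma> \<delta> f (Sf_mult \<sigma> \<delta> f x y) z - Sf_mult \<sigma> \<delta> f x (Sf_mult \<sigma> \<delta> f y z)"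

definition Sf_right_nucleus :: "('a::division_ring \<Rightarrow> 'a) \<Rightarrow> ('a \<Rightarrow> 'a) \<Rightarrow> 'a poly \<Rightarrow> 'a poly set" where
  "Sf_right_nucleus \<sigma> \<delta> f = {x \<in> Sf_carrier f. \<forall>y\<in>Sf_carrier f. \<forall>z\<in>Sf_carrier f. Sf_assoc \<sigma> \<delta> f y z x = 0}"

definition Sf_nucleus :: "('a::division_ring \<Rightarrow> 'a) \<Rightarrow> ('a \<Rightarrow> 'a) \<Rightarrow> 'a poly \<Rightarrow> 'a poly set" where
  "Sf_nucleus \<sigma> \<delta> f = {x \<in> Sf_carrier f. \<forall>y\<in>Sf_carrier f. \<forall>z\<in>Sf_carrier f.
      Sf_assoc \<sigma> \<delta> f x y z = 0 \<and> Sf_assoc \<sigma> \<delta> f y x z = 0 \<and> Sf_assoc \<sigma> \<delta> f y z x = 0}"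

definition weak_semi_invariant :: "('a::division_ring \<Rightarrow> 'a) \<Rightarrow> ('a \<Rightarrow> 'a) \<Rightarrow> 'a set \<Rightarrow> 'a poly \<Rightarrow> bool" where
  "weak_semi_invariant \<sigma> \<delta> B f \<longleftrightarrow> (\<forall>b\<in>B. \<exists>d. skew_mult \<sigma> \<delta> f [:b:] = skew_mult \<sigma> \<delta> [:d:] f)"

definition right_invariant :: "('a::division_ring \<Rightarrow> 'a) \<Rightarrow> ('a \<Rightarrow> 'a) \<Rightarrow> 'a poly \<Rightarrow> bool" where
  "right_invariant \<sigma> \<delta> f \<longleftrightarrow> (\<forall>g. \<exists>h. skew_mult \<sigma> \<delta> f g = skew_mult \<sigma> \<delta> h f)"

end

theory Submission
  imports Defs
begin

context
  fixes \<sigma> \<delta> :: "'a::division_ring \<Rightarrow> 'a"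
  assumes re: "ring_endo \<sigma>" and ld: "left_sigma_derivation \<sigma> \<delta>"
begin

abbreviation "T \<equiv> tmul \<sigma> \<delta>"
abbreviation "M \<equiv> skew_mult \<sigma> \<delta>"

lemma sig_add: "\<sigma> (a + b) = \<sigma> a + \<sigma> b" using re unfolding ring_endo_def by blast
lemma sig_mult: "\<sigma> (a * b) = \<sigma> a * \<sigma> b" using re unfolding ring_endo_def by blast
lemma sig_1: "\<sigma> 1 = 1" using re unfolding ring_endo_def by blast
lemma del_add: "\<delta> (a + b) = \<delta> a + \<delta> b" using ld unfolding left_sigma_derivation_def by blast
lemma del_mult: "\<delta> (a * b) = \<sigma> a * \<delta> b + \<delta> a * b" using ld unfolding left_sigma_derivation_def by blast
lemma sig_0: "\<sigma> 0 = 0" using sig_add[of 0 0] by simp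
lemma del_0: "\<delta> 0 = 0" using del_add[of 0 0] by simp
lemma del_1: "\<delta> 1 = 0" using del_mult[of 1 1] by (simp add: sig_1)
lemma sig_minus: "\<sigma> (- a) = - \<sigma> a" by (metis add.inverse_unique add.right_inverse sig_0 sig_add)
lemma del_minus: "\<delta> (- a) = - \<delta> a" by (metis add.inverse_unique add.right_inverse del_0 del_add)

lemma coeff_T: "coeff (T p) n = (if n = 0 then 0 else \<sigma> (coeff p (n - 1))) + \<delta> (coeff p n)"
  unfolding tmul_def by (cases n) (auto simp: coeff_map_poly sig_0 del_0)

lemma coeff_lscal: "coeff (lscal c p) n = c * coeff p n"
  unfolding lscal_def by (simp add: coeff_map_poly)

lemma T_add: "T (p + q) = T p + T q"
  by (rule poly_eqI) (simp add: coeff_T sig_add del_add algebra_simps)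
lemma T_0: "T 0 = 0"
  by (rule poly_eqI) (simp add: coeff_T sig_0 del_0)
lemma T_diff: "T (p - q) = T p - T q"
  using T_add[of "p - q" q] by (simp add: eq_diff_eq)

lemma lscal_add_right: "lscal c (p + q) = lscal c p + lscal c q"
  by (rule poly_eqI) (simp add: coeff_lscal algebra_simps)
lemma lscal_add_left: "lscal (a + b) p = lscal a p + lscal b p"
  by (rule poly_eqI) (simp add: coeff_lscal algebra_simps)
lemma lscal_mult: "lscal (a * b) p = lscal a (lscal b p)"
  by (rule poly_eqI) (simp add: coeff_lscal algebra_simps)
lemma lscal_1: "lscal 1 p = p"
  by (rule poly_eqI) (simp add: coeff_lscal)
lemma lscal_0l: "lscal 0 p = 0"
  by (rule poly_eqI) (simp add: coeff_lscal)
lemma lscal_0r: "lscal c 0 = 0"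
  by (rule poly_eqI) (simp add: coeff_lscal)
lemma lscal_pCons: "lscal c (pCons a p) = pCons (c * a) (lscal c p)"
  by (rule poly_eqI) (simp add: coeff_lscal coeff_pCons split: nat.split)

lemma T_lscal: "T (lscal a p) = lscal (\<sigma> a) (T p) + lscal (\<delta> a) p"
  by (rule poly_eqI) (simp add: coeff_T coeff_lscal sig_mult del_mult algebra_simps)

lemma T_pCons: "T (pCons a p) = pCons (\<delta> a) ([:\<sigma> a:] + T p)"
proof (rule poly_eqI)
  fix n show "coeff (T (pCons a p)) n = coeff (pCons (\<delta> a) ([:\<sigma> a:] + T p)) n"
    by (cases n; cases "n - 1") (auto simp: coeff_T coeff_pCons sig_0 del_0)
qed

lemma M_ext: "degree p < N \<Longrightarrow> M p q = (\<Sum>i<N. lscal (coeff p i) ((T ^^ i) q))"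
  unfolding skew_mult_def
  by (rule sum.mono_neutral_left) (auto simp: coeff_eq_0 lscal_0l)

lemma M_pCons: "M (pCons a p) q = lscal a q + M p (T q)"
proof -
  let ?N = "Suc (degree p)"
  have "M (pCons a p) q = (\<Sum>i<Suc ?N. lscal (coeff (pCons a p) i) ((T ^^ i) q))"
    by (rule M_ext) (simp add: degree_pCons_le le_imp_less_Suc)
  also have "\<dots> = lscal a q + (\<Sum>i<?N. lscal (coeff p i) ((T ^^ i) (T q)))"
    by (subst sum.lessThan_Suc_shift) (simp add: funpow_Suc_right del: funpow.simps)
  also have "(\<Sum>i<?N. lscal (coeff p i) ((T ^^ i) (T q))) = M p (T q)"
    by (rule M_ext[symmetric]) simp
  finally show ?thesis .
qed

lemma M_0: "M 0 q = 0"
  unfolding skew_mult_def by (simp add: lscal_0l)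

lemma M_const: "M [:c:] q = lscal c q"
  by (simp add: M_pCons M_0)

lemma M_add_right: "M p (q1 + q2) = M p q1 + M p q2"
  by (induction p arbitrary: q1 q2 rule: pCons_induct)
     (simp_all add: M_0 M_pCons T_add lscal_add_right algebra_simps)

lemma M_0r: "M p 0 = 0"
  using M_add_right[of p 0 0] by simp

lemma M_diff_right: "M p (q1 - q2) = M p q1 - M p q2"
  using M_add_right[of p "q1 - q2" q2] by (simp add: algebra_simps)

lemma M_add_left: "M (p1 + p2) q = M p1 q + M p2 q"
proof -
  let ?N = "Suc (max (degree p1) (degree p2))"
  have "M (p1 + p2) q = (\<Sum>i<?N. lscal (coeff (p1 + p2) i) ((T ^^ i) q))"
    by (rule M_ext) (meson degree_add_le le_imp_less_Suc max.cobounded1 max.cobounded2)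
  also have "\<dots> = (\<Sum>i<?N. lscal (coeff p1 i) ((T ^^ i) q)) + (\<Sum>i<?N. lscal (coeff p2 i) ((T ^^ i) q))"
    by (simp add: lscal_add_left sum.distrib)
  also have "\<dots> = M p1 q + M p2 q"
  proof -
    have e1: "M p1 q = (\<Sum>i<?N. lscal (coeff p1 i) ((T ^^ i) q))" by (rule M_ext) simp
    have e2: "M p2 q = (\<Sum>i<?N. lscal (coeff p2 i) ((T ^^ i) q))" by (rule M_ext) simp
    show ?thesis by (simp only: e1 e2)
  qed
  finally show ?thesis .
qed

lemma M_diff_left: "M (p1 - p2) q = M p1 q - M p2 q"
  using M_add_left[of "p1 - p2" p2 q] by (simp add: algebra_simps)

lemma M_lscal: "M (lscal c p) q = lscal c (M p q)"
  by (induction p arbitrary: q rule: pCons_induct)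
     (simp_all add: lscal_0r M_0 M_pCons lscal_pCons lscal_mult lscal_add_right)

lemma M_T: "M (T p) r = T (M p r)"
proof (induction p arbitrary: r rule: pCons_induct)
  case 0 then show ?case by (simp add: T_0 M_0)
next
  case (pCons a p)
  have "M (T (pCons a p)) r = lscal (\<delta> a) r + (lscal (\<sigma> a) (T r) + M (T p) (T r))"
    by (simp add: T_pCons M_pCons M_add_left M_const M_0)
  also have "\<dots> = lscal (\<delta> a) r + (lscal (\<sigma> a) (T r) + T (M p (T r)))"
    by (simp add: pCons.IH)
  also have "\<dots> = T (M (pCons a p) r)"
    by (simp add: M_pCons T_add T_lscal algebra_simps)
  finally show ?case .
qed

lemma M_assoc: "M (M p q) r = M p (M q r)"
proof (induction p arbitrary: q rule: pCons_induct)
  case 0 then show ?case by (simp add: M_0)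
next
  case (pCons a p)
  show ?case
    by (simp add: M_pCons M_add_left M_lscal pCons.IH M_T)
qed


lemma deg_lscal_le: "degree (lscal c p) \<le> degree p"
  by (rule degree_le) (simp add: coeff_lscal coeff_eq_0)

lemma deg_lscal: "c \<noteq> 0 \<Longrightarrow> degree (lscal c p) = degree p"
proof (cases "p = 0")
  case True then show ?thesis by (simp add: lscal_0r)
next
  case False
  assume c: "c \<noteq> 0"
  have "coeff (lscal c p) (degree p) \<noteq> 0" using c False by (simp add: coeff_lscal)
  then have "degree p \<le> degree (lscal c p)" by (rule le_degree)
  then show ?thesis using deg_lscal_le[of c p] by simp
qed

lemma lead_lscal: "c \<noteq> 0 \<Longrightarrow> lead_coeff (lscal c p) = c * lead_coeff p"
  by (simp add: deg_lscal coeff_lscal)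

lemma deg_T_le: "degree (T p) \<le> Suc (degree p)"
  by (rule degree_le) (simp add: coeff_T coeff_eq_0 sig_0 del_0)

lemma T_monic:
  assumes "lead_coeff f = 1"
  shows "degree (T f) = Suc (degree f) \<and> lead_coeff (T f) = 1"
proof -
  have c: "coeff (T f) (Suc (degree f)) = 1"
    by (simp add: coeff_T assms sig_1 coeff_eq_0 del_0)
  have "degree (T f) = Suc (degree f)"
  proof -
    have "Suc (degree f) \<le> degree (T f)" by (rule le_degree) (simp add: c)
    then show ?thesis using deg_T_le[of f] by simp
  qed
  then show ?thesis using c by simp
qed

lemma deg_M_le: "degree (M p q) \<le> degree p + degree q"
proof (induction p arbitrary: q rule: pCons_induct)
  case 0 then show ?case by (simp add: M_0)
next
  case (pCons a p)
  show ?case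
  proof (cases "p = 0")
    case True then show ?thesis by (simp add: M_pCons M_0 deg_lscal_le)
  next
    case False
    have "degree (M p (T q)) \<le> degree p + Suc (degree q)"
      using pCons.IH[of "T q"] deg_T_le[of q] by linarith
    moreover have "degree (lscal a q + M p (T q)) \<le> max (degree (lscal a q)) (degree (M p (T q)))"
      by (rule degree_add_le_max)
    moreover have "degree (pCons a p) = Suc (degree p)" using False by simp
    ultimately show ?thesis using deg_lscal_le[of a q]
      by (simp add: M_pCons)
  qed
qed

lemma deg_M_monic:
  assumes "q \<noteq> 0" "lead_coeff f = 1"
  shows "degree (M q f) = degree q + degree f \<and> lead_coeff (M q f) = lead_coeff q"
  using assms
proof (induction q arbitrary: f rule: pCons_induct)
  case 0 then show ?case by simp
next
  case (pCons a p)
  show ?case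
  proof (cases "p = 0")
    case True
    then have "a \<noteq> 0" using pCons by simp
    then show ?thesis using True pCons.prems by (simp add: M_pCons M_0 deg_lscal lead_lscal coeff_lscal)
  next
    case False
    have Tf: "degree (T f) = Suc (degree f)" "lead_coeff (T f) = 1" using T_monic[OF pCons.prems(2)] by auto
    have IH: "degree (M p (T f)) = degree p + Suc (degree f)" "lead_coeff (M p (T f)) = lead_coeff p"
      using pCons.IH[OF False Tf(2)] Tf(1) by auto
    have lt: "degree (lscal a f) < degree (M p (T f))"
      using deg_lscal_le[of a f] IH(1) by linarith
    show ?thesis using False IH lt
      by (simp add: M_pCons degree_add_eq_right lead_coeff_add_le coeff_eq_0)
  qed
qed

lemma div_exists:
  assumes "lead_coeff f = 1" "0 < degree f"
  shows "\<exists>q r. degree r < degree f \<and> g = M q f + r"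
proof (induction "degree g" arbitrary: g rule: less_induct)
  case less
  show ?case
  proof (cases "degree g < degree f")
    case True
    then show ?thesis by (rule_tac x=0 in exI, rule_tac x=g in exI) (simp add: M_0)
  next
    case False
    let ?c = "lead_coeff g" let ?k = "degree g - degree f"
    have gnz: "g \<noteq> 0" using False assms by auto
    then have cnz: "?c \<noteq> 0" by simp
    have D: "degree (M (monom ?c ?k) f) = degree g" "lead_coeff (M (monom ?c ?k) f) = ?c"
      using deg_M_monic[of "monom ?c ?k" f] cnz assms False by (auto simp: degree_monom_eq)
    define g' where "g' = g - M (monom ?c ?k) f"
    have "degree g' < degree g"
    proof (rule degree_lessI)
      show "g' \<noteq> 0 \<or> 0 < degree g" using False assms by auto
      show "\<forall>k\<ge>degree g. coeff g' k = 0"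
      proof (intro allI impI)
        fix k assume "degree g \<le> k"
        then show "coeff g' k = 0" unfolding g'_def using D
          by (cases "k = degree g") (auto simp: coeff_eq_0)
      qed
    qed
    then obtain q r where qr: "degree r < degree f" "g' = M q f + r" using less by blast
    have "g = M (monom ?c ?k + q) f + r" using qr unfolding g'_def by (simp add: M_add_left algebra_simps)
    then show ?thesis using qr by blast
  qed
qed

lemma div_unique:
  assumes "lead_coeff f = 1" "degree r1 < degree f" "degree r2 < degree f"
    and "M q1 f + r1 = M q2 f + r2"
  shows "r1 = r2"
proof (cases "q1 = q2")
  case True then show ?thesis using assms by simp
next
  case False
  then have "q1 - q2 \<noteq> 0" by simp
  then have "degree (M (q1 - q2) f) \<ge> degree f" using deg_M_monic[of "q1 - q2" f] assms by simp
  moreover have "M (q1 - q2) f = r2 - r1" using assms(4) by (simp add: M_diff_left algebra_simps)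
  moreover have "degree (r2 - r1) < degree f" using assms by (simp add: degree_diff_less)
  ultimately show ?thesis by simp
qed

abbreviation "Rm \<equiv> skew_rmod \<sigma> \<delta>"

lemma rmod_eq:
  assumes "lead_coeff f = 1" "degree r < degree f" "g = M q f + r"
  shows "Rm g f = r"
  unfolding skew_rmod_def
proof (rule the_equality)
  show "degree r < degree f \<and> (\<exists>q. g = M q f + r)" using assms by blast
next
  fix r' assume a: "degree r' < degree f \<and> (\<exists>q. g = M q f + r')"
  then obtain q' where q': "g = M q' f + r'" by blast
  have "M q' f + r' = M q f + r" using q' assms(3) by simp
  then show "r' = r" using div_unique[OF assms(1)] a assms(2) by blast
qed

lemma rmod_spec:
  assumes "lead_coeff f = 1" "0 < degree f"
  shows "degree (Rm g f) < degree f \<and> (\<exists>q. g = M q f + Rm g f)"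
proof -
  obtain q r where qr: "degree r < degree f" "g = M q f + r" using div_exists[OF assms] by blast
  have "Rm g f = r" by (rule rmod_eq[OF assms(1) qr])
  then show ?thesis using qr by blast
qed

lemma rmod_diff:
  assumes "lead_coeff f = 1" "0 < degree f"
  shows "Rm (a - b) f = Rm a f - Rm b f"
proof -
  obtain qa where qa: "a = M qa f + Rm a f" using rmod_spec[OF assms, of a] by blast
  obtain qb where qb: "b = M qb f + Rm b f" using rmod_spec[OF assms, of b] by blast
  have e: "a - b = M (qa - qb) f + (Rm a f - Rm b f)"
    by (subst qa, subst qb) (simp add: M_diff_left algebra_simps)
  have d: "degree (Rm a f - Rm b f) < degree f"
    by (rule degree_diff_less) (use rmod_spec[OF assms] in blast)+
  show ?thesis by (rule rmod_eq[OF assms(1) d e])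
qed

lemma rmod_Rf:
  assumes "lead_coeff f = 1" "0 < degree f"
  shows "Rm (M h f) f = 0"
  using rmod_eq[OF assms(1), of 0 "M h f" h] assms by simp

lemma rmod_small:
  assumes "lead_coeff f = 1" "degree g < degree f"
  shows "Rm g f = g"
  using rmod_eq[OF assms(1,2), of g 0] by (simp add: M_0)

lemma rmod_zero_iff:
  assumes "lead_coeff f = 1" "0 < degree f"
  shows "Rm g f = 0 \<longleftrightarrow> (\<exists>h. g = M h f)"
  using rmod_spec[OF assms, of g] rmod_Rf[OF assms] by auto


lemma deg_diff_same:
  assumes "degree a = n" "degree b = n" "lead_coeff a = lead_coeff b" "0 < n"
  shows "degree (a - b) < n"
proof (rule degree_lessI)
  show "a - b \<noteq> 0 \<or> 0 < n" using assms by simp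
  show "\<forall>k\<ge>n. coeff (a - b) k = 0"
  proof (intro allI impI)
    fix k assume "n \<le> k"
    then show "coeff (a - b) k = 0" using assms by (cases "k = n") (auto simp: coeff_eq_0)
  qed
qed

lemma assoc_formula:
  assumes f1: "lead_coeff f = 1" and f0: "0 < degree f"
    and q: "M x y = M q f + Sf_mult \<sigma> \<delta> f x y"
  shows "Sf_assoc \<sigma> \<delta> f x y z = - Rm (M q (M f z)) f"
proof -
  have s: "Sf_mult \<sigma> \<delta> f x y = M x y - M q f" using q by (simp add: algebra_simps)
  obtain q' where q': "M y z = M q' f + Rm (M y z) f" using rmod_spec[OF f1 f0, of "M y z"] by blast
  have s': "Sf_mult \<sigma> \<delta> f y z = M y z - M q' f" using q' unfolding Sf_mult_def by (simp add: algebra_simps)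
  have L: "Sf_mult \<sigma> \<delta> f (Sf_mult \<sigma> \<delta> f x y) z = Rm (M x (M y z)) f - Rm (M q (M f z)) f"
    unfolding s by (simp add: Sf_mult_def M_diff_left M_assoc rmod_diff[OF f1 f0])
  have R: "Sf_mult \<sigma> \<delta> f x (Sf_mult \<sigma> \<delta> f y z) = Rm (M x (M y z)) f"
    unfolding s' by (simp add: Sf_mult_def M_diff_right M_assoc[symmetric] rmod_diff[OF f1 f0] rmod_Rf[OF f1 f0])
  show ?thesis unfolding Sf_assoc_def L R by simp
qed

lemma rightinv_crit:
  assumes f1: "lead_coeff f = 1" and f0: "0 < degree f"
    and H: "\<And>z. degree z < degree f \<Longrightarrow> \<exists>h. M f z = M h f"
  shows "right_invariant \<sigma> \<delta> f"
  unfolding right_invariant_def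
proof
  fix g
  obtain q where q: "g = M q f + Rm g f" using rmod_spec[OF f1 f0, of g] by blast
  obtain h where h: "M f (Rm g f) = M h f" using H[of "Rm g f"] rmod_spec[OF f1 f0, of g] by blast
  have "M f g = M (M f q + h) f"
    by (subst q) (simp add: M_add_right M_add_left M_assoc h)
  then show "\<exists>h. M f g = M h f" by blast
qed

lemma T_monom1: "T (monom 1 k) = monom 1 (Suc k)"
  by (rule poly_eqI) (auto simp: coeff_T sig_1 del_1 sig_0 del_0)

lemma M_t: "M (monom 1 1) z = T z"
  by (simp add: monom_Suc monom_0 M_pCons lscal_0l M_const lscal_1 M_0)

lemma M_cinv:
  assumes "c \<noteq> 0" shows "M [:inverse c:] (M [:c:] w) = w"
  by (simp add: M_const lscal_mult[symmetric] assms lscal_1)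


lemma main_ctx:
  assumes f1: "lead_coeff f = 1" and f2: "degree f \<ge> 2"
  shows "(weak_semi_invariant \<sigma> \<delta> B f \<longleftrightarrow> (\<lambda>b. [:b:]) ` B \<subseteq> Sf_right_nucleus \<sigma> \<delta> f)
    \<and> (weak_semi_invariant \<sigma> \<delta> B f \<and> \<not> right_invariant \<sigma> \<delta> f \<longrightarrow>
         (\<lambda>b. [:b:]) ` B \<subseteq> Sf_nucleus \<sigma> \<delta> f \<and> Sf_nucleus \<sigma> \<delta> f \<subseteq> range (\<lambda>b. [:b:]))"
proof -
  have f0: "0 < degree f" using f2 by simp
  have constc: "[:b:] \<in> Sf_carrier f" for b using f0 by (simp add: Sf_carrier_def)
  have rm0: "Rm 0 f = 0" using rmod_small[OF f1, of 0] f0 by simp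
  have RN: "[:b:] \<in> Sf_right_nucleus \<sigma> \<delta> f \<longleftrightarrow> (\<exists>d. M f [:b:] = M [:d:] f)" for b
  proof
    assume "\<exists>d. M f [:b:] = M [:d:] f"
    then obtain d where d: "M f [:b:] = M [:d:] f" by blast
    show "[:b:] \<in> Sf_right_nucleus \<sigma> \<delta> f"
      unfolding Sf_right_nucleus_def
    proof (intro CollectI conjI ballI constc)
      fix y z
      obtain q where q: "M y z = M q f + Sf_mult \<sigma> \<delta> f y z"
        using rmod_spec[OF f1 f0, of "M y z"] unfolding Sf_mult_def by blast
      have "Sf_assoc \<sigma> \<delta> f y z [:b:] = - Rm (M q (M f [:b:])) f"
        by (rule assoc_formula[OF f1 f0 q])
      also have "\<dots> = 0" unfolding d M_assoc[symmetric] by (simp add: rmod_Rf[OF f1 f0])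
      finally show "Sf_assoc \<sigma> \<delta> f y z [:b:] = 0" .
    qed
  next
    assume rn: "[:b:] \<in> Sf_right_nucleus \<sigma> \<delta> f"
    let ?m = "degree f"
    let ?y = "monom (1::'a) 1" and ?z = "monom (1::'a) (?m - 1)"
    have yc: "?y \<in> Sf_carrier f" using f2 by (simp add: Sf_carrier_def degree_monom_eq)
    have zc: "?z \<in> Sf_carrier f" using f2 by (simp add: Sf_carrier_def degree_monom_eq)
    have yz: "M ?y ?z = monom 1 ?m"
    proof -
      have "M ?y ?z = monom 1 (Suc (?m - 1))" unfolding M_t T_monom1 ..
      then show ?thesis using f0 by simp
    qed
    have dl: "degree (monom 1 ?m - f) < ?m"
      by (rule deg_diff_same) (use f1 f0 in \<open>auto simp: degree_monom_eq\<close>)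
    have e: "monom 1 ?m = M [:1:] f + (monom 1 ?m - f)" by (simp add: M_const lscal_1)
    have "Sf_mult \<sigma> \<delta> f ?y ?z = monom 1 ?m - f"
      unfolding Sf_mult_def yz by (rule rmod_eq[OF f1 dl e])
    then have q: "M ?y ?z = M [:1:] f + Sf_mult \<sigma> \<delta> f ?y ?z" using e yz by simp
    have a0: "Sf_assoc \<sigma> \<delta> f ?y ?z [:b:] = 0" using rn yc zc unfolding Sf_right_nucleus_def by blast
    have "Sf_assoc \<sigma> \<delta> f ?y ?z [:b:] = - Rm (M f [:b:]) f"
      using assoc_formula[OF f1 f0 q] by (simp add: M_const lscal_1)
    then have "Rm (M f [:b:]) f = 0" using a0 by simp
    then obtain h where h: "M f [:b:] = M h f" using rmod_zero_iff[OF f1 f0] by blast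
    have "h = [:coeff h 0:]"
    proof (cases "h = 0")
      case True then show ?thesis by simp
    next
      case False
      have "degree h + ?m \<le> ?m + degree [:b:]"
        using deg_M_monic[OF False f1] deg_M_le[of f "[:b:]"] h by simp
      then have "degree h = 0" by simp
      then show ?thesis by (simp add: degree_0_id)
    qed
    then show "\<exists>d. M f [:b:] = M [:d:] f" using h by metis
  qed
  have part1: "weak_semi_invariant \<sigma> \<delta> B f \<longleftrightarrow> (\<lambda>b. [:b:]) ` B \<subseteq> Sf_right_nucleus \<sigma> \<delta> f"
    unfolding weak_semi_invariant_def using RN by blast
  have part2: "(\<lambda>b. [:b:]) ` B \<subseteq> Sf_nucleus \<sigma> \<delta> f \<and> Sf_nucleus \<sigma> \<delta> f \<subseteq> range (\<lambda>b. [:b:])"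
    if wsi: "weak_semi_invariant \<sigma> \<delta> B f" and nri: "\<not> right_invariant \<sigma> \<delta> f"
  proof
    show "(\<lambda>b. [:b:]) ` B \<subseteq> Sf_nucleus \<sigma> \<delta> f"
    proof
      fix x assume "x \<in> (\<lambda>b. [:b:]) ` B"
      then obtain b where b: "b \<in> B" "x = [:b:]" by blast
      have rn: "[:b:] \<in> Sf_right_nucleus \<sigma> \<delta> f" using part1 wsi b by blast
      show "x \<in> Sf_nucleus \<sigma> \<delta> f"
        unfolding Sf_nucleus_def b(2)
      proof (intro CollectI conjI ballI constc)
        fix y z assume yc: "y \<in> Sf_carrier f" and zc: "z \<in> Sf_carrier f"
        show "Sf_assoc \<sigma> \<delta> f y z [:b:] = 0" using rn yc zc unfolding Sf_right_nucleus_def by blast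
        have d1: "degree (M [:b:] y) < degree f"
          using deg_M_le[of "[:b:]" y] yc by (simp add: Sf_carrier_def)
        have q1: "M [:b:] y = M 0 f + Sf_mult \<sigma> \<delta> f [:b:] y"
          unfolding Sf_mult_def by (simp add: rmod_small[OF f1 d1] M_0)
        show "Sf_assoc \<sigma> \<delta> f [:b:] y z = 0"
          using assoc_formula[OF f1 f0 q1] by (simp add: M_0 rm0)
        have d2: "degree (M y [:b:]) < degree f"
          using deg_M_le[of y "[:b:]"] yc by (simp add: Sf_carrier_def)
        have q2: "M y [:b:] = M 0 f + Sf_mult \<sigma> \<delta> f y [:b:]"
          unfolding Sf_mult_def by (simp add: rmod_small[OF f1 d2] M_0)
        show "Sf_assoc \<sigma> \<delta> f y [:b:] z = 0"
          using assoc_formula[OF f1 f0 q2] by (simp add: M_0 rm0)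
      qed
    qed
  next
    show "Sf_nucleus \<sigma> \<delta> f \<subseteq> range (\<lambda>b. [:b:])"
    proof
      fix x assume xn: "x \<in> Sf_nucleus \<sigma> \<delta> f"
      show "x \<in> range (\<lambda>b. [:b:])"
      proof (cases "degree x = 0")
        case True
        then have "x = [:coeff x 0:]" by (simp add: degree_0_id)
        then show ?thesis by blast
      next
        case False
        let ?m = "degree f" and ?k = "degree x" and ?c = "lead_coeff x"
        have xnz: "x \<noteq> 0" using False by auto
        then have cnz: "?c \<noteq> 0" by simp
        have xc: "x \<in> Sf_carrier f" using xn unfolding Sf_nucleus_def by blast
        then have klt: "?k < ?m" by (simp add: Sf_carrier_def)
        let ?y = "monom (1::'a) (?m - ?k)"
        have yc: "?y \<in> Sf_carrier f" using False f0 by (simp add: Sf_carrier_def degree_monom_eq)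
        have D: "degree (M x ?y) = ?m" "lead_coeff (M x ?y) = ?c"
          using deg_M_monic[OF xnz, of ?y] klt by (auto simp: degree_monom_eq)
        have Dc: "degree (M [:?c:] f) = ?m" "lead_coeff (M [:?c:] f) = ?c"
          using cnz f1 by (auto simp: M_const deg_lscal lead_lscal coeff_lscal)
        have dl: "degree (M x ?y - M [:?c:] f) < ?m"
          by (rule deg_diff_same) (use D Dc f0 in auto)
        have e: "M x ?y = M [:?c:] f + (M x ?y - M [:?c:] f)" by simp
        have "Sf_mult \<sigma> \<delta> f x ?y = M x ?y - M [:?c:] f"
          unfolding Sf_mult_def by (rule rmod_eq[OF f1 dl e])
        then have q: "M x ?y = M [:?c:] f + Sf_mult \<sigma> \<delta> f x ?y" by simp
        have H: "\<exists>h. M f z = M h f" if zd: "degree z < degree f" for z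
        proof -
          have zc: "z \<in> Sf_carrier f" using zd by (simp add: Sf_carrier_def)
          have a0: "Sf_assoc \<sigma> \<delta> f x ?y z = 0" using xn yc zc unfolding Sf_nucleus_def by blast
          have "Sf_assoc \<sigma> \<delta> f x ?y z = - Rm (M [:?c:] (M f z)) f" by (rule assoc_formula[OF f1 f0 q])
          then have "Rm (M [:?c:] (M f z)) f = 0" using a0 by simp
          then obtain h where h: "M [:?c:] (M f z) = M h f" using rmod_zero_iff[OF f1 f0] by blast
          have "M f z = M [:inverse ?c:] (M [:?c:] (M f z))" using M_cinv[OF cnz] by simp
          also have "\<dots> = M (M [:inverse ?c:] h) f" by (simp add: h M_assoc)
          finally show ?thesis by blast
        qed
        have "right_invariant \<sigma> \<delta> f" by (rule rightinv_crit[OF f1 f0 H])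
        with nri show ?thesis by blast
      qed
    qed
  qed
  show ?thesis using part1 part2 by blast
qed

end

theorem mainTheorem3:
  fixes \<sigma> \<delta> :: "'a::division_ring \<Rightarrow> 'a" and f :: "'a poly" and B :: "'a set"
  assumes "ring_endo \<sigma>" and "left_sigma_derivation \<sigma> \<delta>"
    and "lead_coeff f = 1" and "degree f \<ge> 2"
    and "is_subring B"
  shows "(weak_semi_invariant \<sigma> \<delta> B f \<longleftrightarrow> (\<lambda>b. [:b:]) ` B \<subseteq> Sf_right_nucleus \<sigma> \<delta> f)
    \<and> (weak_semi_invariant \<sigma> \<delta> B f \<and> \<not> right_invariant \<sigma> \<delta> f \<longrightarrow>
         (\<lambda>b. [:b:]) ` B \<subseteq> Sf_nucleus \<sigma> \<delta> f \<and> Sf_nucleus \<sigma> \<delta> f \<subseteq> range (\<lambda>b. [:b:]))"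
  by (rule main_ctx[OF assms(1,2,3,4)])

end
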